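(* Let $n\geq1$, let $a_1,\dots,a_{n-1}\in\mathbb{R}$ and $\alpha\in\mathbb{C}$, and let $$O_\alpha(z)=z^n\,\frac{\alpha+a_{n-1}z+\dots+a_1 z^{n-1}+z^n}{1+a_1 z+\dots+a_{n-1}z^{n-1}+\alpha z^n},$$ where $\alpha\neq0$ and $1+a_1+\dots+a_{n-1}+\alpha\neq0$, so that $z=1$ is a fixed point of $O_\alpha$. Let $$A=2n+2\sum_{j=1}^{n-1}(n-j)a_j,\qquad A'=1+\sum_{j=1}^{n-1}a_j,$$ with $A'\neq0$. Then: (i) $z=1$ is attracting if $|\alpha+A'|>|A|$; (ii) $z=1$ is indifferent if $|\alpha+A'|=|A|$; (iii) $z=1$ is repelling if $|\alpha+A'|<|A|$. Moreover, if $A=0$, the fixed point $z=1$ is superattracting.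
   Context: For a fixed point $z_0$ of a rational map $R$ with multiplier $\lambda=R'(z_0)$, $z_0$ is attracting if $|\lambda|<1$, superattracting if $\lambda=0$, repelling if $|\lambda|>1$, and indifferent if $|\lambda|=1$. *)

theory Defs
  imports "HOL-Analysis.Analysis"
begin

definition O_map :: "nat \<Rightarrow> (nat \<Rightarrow> real) \<Rightarrow> complex \<Rightarrow> complex \<Rightarrow> complex" where
  "O_map n a \<alpha> z =
     z ^ n * ((\<alpha> + (\<Sum>j=1..n-1. of_real (a j) * z ^ (n - j)) + z ^ n) /
              (1 + (\<Sum>j=1..n-1. of_real (a j) * z ^ j) + \<alpha> * z ^ n))"

definition multiplier :: "(complex \<Rightarrow> complex) \<Rightarrow> complex \<Rightarrow> complex" where
  "multiplier R z0 = deriv R z0"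

definition attracting_fp :: "(complex \<Rightarrow> complex) \<Rightarrow> complex \<Rightarrow> bool" where
  "attracting_fp R z0 \<longleftrightarrow> R z0 = z0 \<and> norm (multiplier R z0) < 1"

definition superattracting_fp :: "(complex \<Rightarrow> complex) \<Rightarrow> complex \<Rightarrow> bool" where
  "superattracting_fp R z0 \<longleftrightarrow> R z0 = z0 \<and> multiplier R z0 = 0"

definition repelling_fp :: "(complex \<Rightarrow> complex) \<Rightarrow> complex \<Rightarrow> bool" where
  "repelling_fp R z0 \<longleftrightarrow> R z0 = z0 \<and> norm (multiplier R z0) > 1"

definition indifferent_fp :: "(complex \<Rightarrow> complex) \<Rightarrow> complex \<Rightarrow> bool" where
  "indifferent_fp R z0 \<longleftrightarrow> R z0 = z0 \<and> norm (multiplier R z0) = 1"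

end

theory Submission
  imports Defs
begin

theorem proposition4p2:
  fixes n :: nat and a :: "nat \<Rightarrow> real" and \<alpha> :: complex and A A' :: real
  assumes "n \<ge> 1"
    and "\<alpha> \<noteq> 0"
    and "1 + (\<Sum>j=1..n-1. complex_of_real (a j)) + \<alpha> \<noteq> 0"
    and "A = 2 * real n + 2 * (\<Sum>j=1..n-1. real (n - j) * a j)"
    and "A' = 1 + (\<Sum>j=1..n-1. a j)"
    and "A' \<noteq> 0"
  shows "(norm (\<alpha> + complex_of_real A') > \<bar>A\<bar> \<longrightarrow> attracting_fp (O_map n a \<alpha>) 1)
       \<and> (norm (\<alpha> + complex_of_real A') = \<bar>A\<bar> \<longrightarrow> indifferent_fp (O_map n a \<alpha>) 1)
       \<and> (norm (\<alpha> + complex_of_real A') < \<bar>A\<bar> \<longrightarrow> repelling_fp (O_map n a \<alpha>) 1)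
       \<and> (A = 0 \<longrightarrow> superattracting_fp (O_map n a \<alpha>) 1)"
proof -
  define S where "S = \<alpha> + complex_of_real A'"
  have S: "S \<noteq> 0" using assms(3) unfolding S_def assms(5) by (simp add: algebra_simps)
  define P where "P = (\<lambda>z::complex. \<alpha> + (\<Sum>j=1..n-1. of_real (a j) * z ^ (n - j)) + z ^ n)"
  define Q where "Q = (\<lambda>z::complex. 1 + (\<Sum>j=1..n-1. of_real (a j) * z ^ j) + \<alpha> * z ^ n)"
  define P' where "P' = (\<Sum>j=1..n-1. of_real (a j) * of_nat (n - j)) + (of_nat n :: complex)"
  define Q' where "Q' = (\<Sum>j=1..n-1. of_real (a j) * of_nat j) + \<alpha> * of_nat n"
  have P1: "P 1 = S" unfolding P_def S_def assms(5) by simp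
  have Q1: "Q 1 = S" unfolding Q_def S_def assms(5) by simp
  have dP: "(P has_field_derivative P') (at 1)"
    unfolding P_def P'_def
    by (rule derivative_eq_intros refl | simp add: mult.commute)+
  have dQ: "(Q has_field_derivative Q') (at 1)"
    unfolding Q_def Q'_def
    by (rule derivative_eq_intros refl | simp add: mult.commute)+
  have Oeq: "O_map n a \<alpha> = (\<lambda>z. z ^ n * (P z / Q z))"
    unfolding O_map_def P_def Q_def by (rule ext) simp
  have dO: "(O_map n a \<alpha> has_field_derivative (of_nat n + (P' - Q') / S)) (at 1)"
  proof -
    have Qn: "Q 1 \<noteq> 0" using Q1 S by simp
    note d = DERIV_mult[OF DERIV_power[OF DERIV_ident, of n "1::complex" UNIV] DERIV_divide[OF dP dQ Qn]]
    moreover have "of_nat n * (1 * 1 ^ (n - Suc 0)) * (P 1 / Q 1) + (P' * Q 1 - P 1 * Q') / (Q 1 * Q 1) * 1 ^ n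
        = of_nat n + (P' - Q') / S"
      using S by (simp add: P1 Q1 field_simps)
    ultimately show ?thesis using Oeq by simp
  qed
  have key: "of_nat n * S + (P' - Q') = complex_of_real A"
  proof -
    have "(\<Sum>j=1..n-1. of_real (a j) * (of_nat (n - j) :: complex))
        = (\<Sum>j=1..n-1. of_real (a j) * of_nat n - of_real (a j) * of_nat j)"
      by (rule sum.cong) (auto simp: of_nat_diff algebra_simps)
    then have "(\<Sum>j=1..n-1. of_real (a j) * (of_nat (n - j) :: complex))
        = of_nat n * (\<Sum>j=1..n-1. of_real (a j)) - (\<Sum>j=1..n-1. of_real (a j) * of_nat j)"
      by (simp add: sum_subtractf sum_distrib_left mult.commute)
    moreover have "complex_of_real A = 2 * of_nat n + 2 * (\<Sum>j=1..n-1. of_real (a j) * (of_nat (n - j) :: complex))"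
      unfolding assms(4) by (simp add: mult.commute)
    ultimately show ?thesis unfolding S_def P'_def Q'_def assms(5)
      by (simp add: algebra_simps)
  qed
  have mult: "multiplier (O_map n a \<alpha>) 1 = complex_of_real A / S"
  proof -
    have "multiplier (O_map n a \<alpha>) 1 = of_nat n + (P' - Q') / S"
      unfolding multiplier_def using dO by (rule DERIV_imp_deriv)
    also have "\<dots> = (of_nat n * S + (P' - Q')) / S" using S by (simp add: field_simps)
    finally show ?thesis using key by simp
  qed
  have fix1: "O_map n a \<alpha> 1 = 1" using Oeq P1 Q1 S by simp
  have nm: "norm (multiplier (O_map n a \<alpha>) 1) = \<bar>A\<bar> / norm S"
    unfolding mult by (simp add: norm_divide)
  have Sp: "norm S > 0" using S by simp
  show ?thesis
    unfolding attracting_fp_def indifferent_fp_def repelling_fp_def superattracting_fp_def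
    using fix1 nm Sp mult unfolding S_def[symmetric]
    by (auto simp: divide_less_eq less_divide_eq)
qed

end
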